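(* Let $\mathcal I$ be a nonempty index set, and for each $i\in\mathcal I$ let $\mu^i$ be a stationary policy and $S^i\subset X$ a set with $f(x,\mu^i(x))\in S^i$ for all $x\in S^i$. Define $\bar J_S:X\to[0,\infty]$ by $\bar J_S(x)=\inf_{i\in\mathcal I_x}J_{\mu^i}(x)$, where $\mathcal I_x=\{i\in\mathcal I: x\in S^i\}$ and $\inf\emptyset=\infty$ (so $\bar J_S<\infty$ only possibly on $S=\bigcup_{i\in\mathcal I}S^i$). Fix $\ell\ge1$ and let $\tilde J_S$ be the optimal value and $\tilde\mu$ the rollout policy of the $\ell$-step rollout problem with terminal cost $\bar J_S$. Then $$J_{\tilde\mu}(x)\le\tilde J_S(x)\le\bar J_S(x)\quad\text{for all }x\in X.$$
   Context: Deterministic infinite-horizon problem: arbitrary state space $X$ and control space $U$, dynamics $x_{k+1}=f(x_k,u_k)$ with $f:X\times U\to X$, nonempty control constraint sets $U(x)\subset U$, stage cost $g(x,u)\in[0,\infty]$ for $x\in X$, $u\in U(x)$. A stationary policy is a map $\mu:X\to U$ with $\mu(x)\in U(x)$; its cost is $J_\mu(x_0)=\sum_{k=0}^\infty g(x_k,\mu(x_k))$ with $x_{k+1}=f(x_k,\mu(x_k))$. Standing assumption: for every $J:X\to[0,\infty]$ and every $x\in X$, $\inf_{u\in U(x)}\{g(x,u)+J(f(x,u))\}$ is attained. Rollout with terminal cost $\bar J$ and lookahead $\ell$: $J_0=\bar J$, $J_{k+1}(x)=\min_{u\in U(x)}\{g(x,u)+J_k(f(x,u))\}$; the optimal value is $J_\ell(x)$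 (equal to the minimum of $\sum_{k=0}^{\ell-1}g(x_k,u_k)+\bar J(x_\ell)$ over $u_k\in U(x_k)$ with $x_0=x$, $x_{k+1}=f(x_k,u_k)$), and the rollout policy is $\tilde\mu(x)\in\arg\min_{u\in U(x)}\{g(x,u)+J_{\ell-1}(f(x,u))\}$ (the first control of a minimizing sequence). *)

theory Defs
  imports "HOL-Analysis.Analysis" "HOL-Library.Extended_Nonnegative_Real"
begin

definition is_policy :: "('x \<Rightarrow> 'u set) \<Rightarrow> ('x \<Rightarrow> 'u) \<Rightarrow> bool" where
  "is_policy U \<mu> \<longleftrightarrow> (\<forall>x. \<mu> x \<in> U x)"

definition traj :: "('x \<Rightarrow> 'u \<Rightarrow> 'x) \<Rightarrow> ('x \<Rightarrow> 'u) \<Rightarrow> 'x \<Rightarrow> nat \<Rightarrow> 'x" where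
  "traj f \<mu> x0 k = ((\<lambda>x. f x (\<mu> x)) ^^ k) x0"

definition Jpol :: "('x \<Rightarrow> 'u \<Rightarrow> 'x) \<Rightarrow> ('x \<Rightarrow> 'u \<Rightarrow> ennreal) \<Rightarrow> ('x \<Rightarrow> 'u) \<Rightarrow> 'x \<Rightarrow> ennreal" where
  "Jpol f g \<mu> x0 = (\<Sum>k. g (traj f \<mu> x0 k) (\<mu> (traj f \<mu> x0 k)))"

definition standing_assm :: "('x \<Rightarrow> 'u \<Rightarrow> 'x) \<Rightarrow> ('x \<Rightarrow> 'u set) \<Rightarrow> ('x \<Rightarrow> 'u \<Rightarrow> ennreal) \<Rightarrow> bool" where
  "standing_assm f U g \<longleftrightarrow> (\<forall>x. U x \<noteq> {}) \<and>
     (\<forall>(J::'x \<Rightarrow> ennreal) x. \<exists>u\<in>U x. g x u + J (f x u) = (INF v\<in>U x. g x v + J (f x v)))"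

text \<open>Rollout DP recursion: J_0 = Jbar, J_{k+1}(x) = min_{u in U(x)} (g(x,u) + J_k(f(x,u))).
  (The minimum is the infimum, attained under the standing assumption.)\<close>
fun rolloutJ :: "('x \<Rightarrow> 'u \<Rightarrow> 'x) \<Rightarrow> ('x \<Rightarrow> 'u set) \<Rightarrow> ('x \<Rightarrow> 'u \<Rightarrow> ennreal) \<Rightarrow> ('x \<Rightarrow> ennreal) \<Rightarrow> nat \<Rightarrow> 'x \<Rightarrow> ennreal" where
  "rolloutJ f U g Jbar 0 = Jbar"
| "rolloutJ f U g Jbar (Suc k) = (\<lambda>x. INF u\<in>U x. g x u + rolloutJ f U g Jbar k (f x u))"

definition is_rollout_policy :: "('x \<Rightarrow> 'u \<Rightarrow> 'x) \<Rightarrow> ('x \<Rightarrow> 'u set) \<Rightarrow> ('x \<Rightarrow> 'u \<Rightarrow> ennreal) \<Rightarrow> ('x \<Rightarrow> ennreal) \<Rightarrow> nat \<Rightarrow> ('x \<Rightarrow> 'u) \<Rightarrow> bool" where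
  "is_rollout_policy f U g Jbar l \<mu> \<longleftrightarrow> (\<forall>x. \<mu> x \<in> U x \<and>
     (\<forall>u\<in>U x. g x (\<mu> x) + rolloutJ f U g Jbar (l - 1) (f x (\<mu> x))
               \<le> g x u + rolloutJ f U g Jbar (l - 1) (f x u)))"

definition JbarS :: "('x \<Rightarrow> 'u \<Rightarrow> 'x) \<Rightarrow> ('x \<Rightarrow> 'u \<Rightarrow> ennreal) \<Rightarrow> 'i set \<Rightarrow> ('i \<Rightarrow> 'x \<Rightarrow> 'u) \<Rightarrow> ('i \<Rightarrow> 'x set) \<Rightarrow> 'x \<Rightarrow> ennreal" where
  "JbarS f g I \<mu>s S x = (INF i\<in>{i\<in>I. x \<in> S i}. Jpol f g (\<mu>s i) x)"

end

theory Submission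
  imports Defs
begin

lemma traj_Suc: "traj f \<mu> x (Suc k) = traj f \<mu> (f x (\<mu> x)) k"
  unfolding traj_def by (simp only: funpow_Suc_right comp_apply)

lemma traj_Suc2: "traj f \<mu> x (Suc k) = f (traj f \<mu> x k) (\<mu> (traj f \<mu> x k))"
  unfolding traj_def by simp

lemma Jpol_step: "Jpol f g \<mu> x = g x (\<mu> x) + Jpol f g \<mu> (f x (\<mu> x))"
proof -
  let ?h = "\<lambda>k. g (traj f \<mu> x k) (\<mu> (traj f \<mu> x k))"
  have "(\<lambda>n. ?h (Suc n)) sums (Jpol f g \<mu> (f x (\<mu> x)))"
    unfolding Jpol_def traj_Suc by (rule summable_sums[OF summableI])
  then have "?h sums (Jpol f g \<mu> (f x (\<mu> x)) + ?h 0)" by (rule sums_Suc)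
  then have "Jpol f g \<mu> x = Jpol f g \<mu> (f x (\<mu> x)) + ?h 0"
    unfolding Jpol_def by (rule sums_unique[symmetric])
  then show ?thesis by (simp add: traj_def add.commute)
qed

theorem proposition4:
  fixes f :: "'x \<Rightarrow> 'u \<Rightarrow> 'x" and U :: "'x \<Rightarrow> 'u set" and g :: "'x \<Rightarrow> 'u \<Rightarrow> ennreal"
    and I :: "'i set" and \<mu>s :: "'i \<Rightarrow> 'x \<Rightarrow> 'u" and S :: "'i \<Rightarrow> 'x set"
    and l :: nat and \<mu>t :: "'x \<Rightarrow> 'u"
  assumes standing: "standing_assm f U g"
    and I_ne: "I \<noteq> {}"
    and pol: "\<And>i. i \<in> I \<Longrightarrow> is_policy U (\<mu>s i)"
    and inv: "\<And>i x. i \<in> I \<Longrightarrow> x \<in> S i \<Longrightarrow> f x (\<mu>s i x) \<in> S i"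
    and l: "l \<ge> 1"
    and roll: "is_rollout_policy f U g (JbarS f g I \<mu>s S) l \<mu>t"
  shows "\<forall>x. Jpol f g \<mu>t x \<le> rolloutJ f U g (JbarS f g I \<mu>s S) l x
           \<and> rolloutJ f U g (JbarS f g I \<mu>s S) l x \<le> JbarS f g I \<mu>s S x"
proof -
  define Jb where "Jb = JbarS f g I \<mu>s S"
  define R where "R = rolloutJ f U g Jb"
  have RSuc: "R (Suc k) x = (INF u\<in>U x. g x u + R k (f x u))" for k x
    unfolding R_def by simp
  have base: "R 1 x \<le> Jb x" for x
  proof -
    have "R 1 x \<le> Jpol f g (\<mu>s i) x" if i: "i \<in> I" "x \<in> S i" for i
    proof -
      have u: "\<mu>s i x \<in> U x" using pol[OF i(1)] by (simp add: is_policy_def)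
      have "R 1 x \<le> g x (\<mu>s i x) + Jb (f x (\<mu>s i x))"
        using RSuc[of 0 x] u by (simp add: R_def INF_lower2)
      also have "Jb (f x (\<mu>s i x)) \<le> Jpol f g (\<mu>s i) (f x (\<mu>s i x))"
        unfolding Jb_def JbarS_def by (rule INF_lower) (use i inv in auto)
      then have "g x (\<mu>s i x) + Jb (f x (\<mu>s i x)) \<le> g x (\<mu>s i x) + Jpol f g (\<mu>s i) (f x (\<mu>s i x))"
        by (rule add_left_mono)
      also have "\<dots> = Jpol f g (\<mu>s i) x" by (rule Jpol_step[symmetric])
      finally show ?thesis .
    qed
    then show ?thesis unfolding Jb_def JbarS_def by (intro INF_greatest) auto
  qed
  have mono: "R (Suc k) x \<le> R k x" for k x
  proof (induction k arbitrary: x)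
    case 0 then show ?case using base by (simp add: R_def)
  next
    case (Suc k)
    have "(INF u\<in>U x. g x u + R (Suc k) (f x u)) \<le> (INF u\<in>U x. g x u + R k (f x u))"
      by (rule INF_mono) (use Suc in \<open>auto intro: add_left_mono\<close>)
    then show ?case by (simp only: RSuc)
  qed
  have decr: "R k x \<le> Jb x" for k x
  proof (induction k arbitrary: x)
    case 0 then show ?case by (simp add: R_def)
  next
    case (Suc k) then show ?case using mono order_trans by blast
  qed
  obtain m where lm: "l = Suc m" using l by (cases l) auto
  have Rl: "R l x = g x (\<mu>t x) + R m (f x (\<mu>t x))" for x
  proof -
    have "\<mu>t x \<in> U x" and le: "\<And>u. u \<in> U x \<Longrightarrow> g x (\<mu>t x) + R m (f x (\<mu>t x)) \<le> g x u + R m (f x u)"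
      using roll unfolding is_rollout_policy_def R_def Jb_def lm by auto
    then show ?thesis unfolding lm RSuc
      by (intro antisym INF_greatest INF_lower2[of "\<mu>t x"]) auto
  qed
  have Tm: "g x (\<mu>t x) + R m (f x (\<mu>t x)) \<le> R m x" for x
    using Rl[of x] mono[of m x] lm by simp
  let ?t = "traj f \<mu>t"
  have part: "(\<Sum>k<Suc n. g (?t x k) (\<mu>t (?t x k))) + R m (?t x (Suc n)) \<le> R l x" for n x
  proof (induction n)
    case 0 then show ?case using Rl[of x] by (simp add: traj_def)
  next
    case (Suc n)
    have "(\<Sum>k<Suc (Suc n). g (?t x k) (\<mu>t (?t x k))) + R m (?t x (Suc (Suc n)))
       = (\<Sum>k<Suc n. g (?t x k) (\<mu>t (?t x k))) + (g (?t x (Suc n)) (\<mu>t (?t x (Suc n))) + R m (f (?t x (Suc n)) (\<mu>t (?t x (Suc n)))))"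
      by (simp add: traj_Suc2[of f \<mu>t x "Suc n"] add.assoc)
    also have "\<dots> \<le> (\<Sum>k<Suc n. g (?t x k) (\<mu>t (?t x k))) + R m (?t x (Suc n))"
      by (rule add_left_mono[OF Tm])
    finally show ?case using Suc order_trans by blast
  qed
  have J: "Jpol f g \<mu>t x \<le> R l x" for x
    unfolding Jpol_def
  proof (rule suminf_le_const[OF summableI])
    fix n
    have "(\<Sum>k<n. g (?t x k) (\<mu>t (?t x k))) \<le> (\<Sum>k<Suc n. g (?t x k) (\<mu>t (?t x k)))"
      by (simp add: sum_mono2)
    also have "\<dots> \<le> (\<Sum>k<Suc n. g (?t x k) (\<mu>t (?t x k))) + R m (?t x (Suc n))" by simp
    also have "\<dots> \<le> R l x" by (rule part)
    finally show "(\<Sum>k<n. g (?t x k) (\<mu>t (?t x k))) \<le> R l x" .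
  qed
  show ?thesis using J decr unfolding R_def Jb_def by blast
qed

end
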